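(* Let $\rho_{AB}$ be an arbitrary two-qubit state, $\rho_A=\operatorname{Tr}_B[\rho_{AB}]$, $\rho_B=\operatorname{Tr}_A[\rho_{AB}]$, $\mu_1,\mu_2\in[0,\tfrac{1}{\sqrt3}]$, and $\tau^1_{AB}=\mu_1\rho_{AB}+(1-\mu_1)\rho_A\otimes\tfrac{\mathbb{I}}{2}$, $\tau^2_{AB}=\mu_2\rho_{AB}+(1-\mu_2)\tfrac{\mathbb{I}}{2}\otimes\rho_B$. If the partial transpose of $\tau^1_{AB}$ has at least one negative eigenvalue, then $\rho_{AB}$ is EPR steerable from Bob to Alice. If the partial transpose of $\tau^2_{AB}$ has at least one negative eigenvalue, then $\rho_{AB}$ is EPR steerable from Alice to Bob.
   Context: $\mathbb{I}$ is the $2\times2$ identity. Partial transpose means $(\mathrm{id}\otimes T)$ applied to the two-qubit operator, with $T$ the transpose in the computational basis. EPR steerability: $\rho_{AB}$ is NOT EPR steerable from Bob to Alice iff there exist $P(\lambda)$, quantum states $\rho^A_\lambda$ of Alice, and arbitrary distributions $P(b|B,\lambda)$ such that for all POVM measurements $A=\{M^A_a\}$ of Alice, $B=\{M^B_b\}$ of Bob and all outcomes, $\operatorname{Tr}[(M^A_a\otimes M^B_b)\rho_{AB}]=\sum_\lambda P(\lambda)\operatorname{Tr}[\rho^A_\lambda M^A_a]P(b|B,\lambda)$; otherwise it is steerable from Bob to Alice. Steerability from Alice to Bob is defined symmetrically, with Bob's side given by quantum states $\rho^B_\lambda$ and Alice's side by arbitrary distributions $P(a|A,\lambda)$. *)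

theory Defs
  imports "Jordan_Normal_Form.Char_Poly" "HOL-Analysis.Infinite_Sum"
begin

text \<open>Two-qubit operators are 4x4 complex matrices w.r.t. the computational basis
  |a b> (a for Alice, b for Bob), indexed by 2*a+b.\<close>

definition mtrace :: "complex mat \<Rightarrow> complex" where
  "mtrace A = (\<Sum>i<dim_row A. A $$ (i, i))"

definition psd :: "nat \<Rightarrow> complex mat \<Rightarrow> bool" where
  "psd n A \<longleftrightarrow> A \<in> carrier_mat n n \<and>
     (\<forall>v \<in> carrier_vec n.
        let q = (\<Sum>i<n. \<Sum>j<n. cnj (v $ i) * A $$ (i, j) * v $ j) in Im q = 0 \<and> Re q \<ge> 0)"

definition density :: "nat \<Rightarrow> complex mat \<Rightarrow> bool" where
  "density n A \<longleftrightarrow> psd n A \<and> mtrace A = 1"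

definition qubit_state :: "complex mat \<Rightarrow> bool" where
  "qubit_state A \<longleftrightarrow> density 2 A"

definition two_qubit_state :: "complex mat \<Rightarrow> bool" where
  "two_qubit_state A \<longleftrightarrow> density 4 A"

definition kron :: "complex mat \<Rightarrow> complex mat \<Rightarrow> complex mat" where
  "kron A B = mat (dim_row A * dim_row B) (dim_col A * dim_col B)
     (\<lambda>(i, j). A $$ (i div dim_row B, j div dim_col B) * B $$ (i mod dim_row B, j mod dim_col B))"

definition ptrace_B :: "complex mat \<Rightarrow> complex mat" where
  "ptrace_B r = mat 2 2 (\<lambda>(i, j). \<Sum>k<2. r $$ (2 * i + k, 2 * j + k))"

definition ptrace_A :: "complex mat \<Rightarrow> complex mat" where
  "ptrace_A r = mat 2 2 (\<lambda>(i, j). \<Sum>k<2. r $$ (2 * k + i, 2 * k + j))"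

definition ptranspose_B :: "complex mat \<Rightarrow> complex mat" where
  "ptranspose_B r = mat 4 4 (\<lambda>(i, j). r $$ (2 * (i div 2) + j mod 2, 2 * (j div 2) + i mod 2))"

definition has_neg_eigenvalue :: "complex mat \<Rightarrow> bool" where
  "has_neg_eigenvalue A \<longleftrightarrow> (\<exists>x::real. x < 0 \<and> eigenvalue A (complex_of_real x))"

definition qubit_povm :: "complex mat list \<Rightarrow> bool" where
  "qubit_povm M \<longleftrightarrow> (\<forall>E \<in> set M. psd 2 E) \<and>
     (\<forall>i<2. \<forall>j<2. (\<Sum>b<length M. (M ! b) $$ (i, j)) = (1\<^sub>m 2) $$ (i, j))"

text \<open>Local hidden state models; hidden variables lambda range over a countable set (nat),
  P(lambda) a probability distribution, sums as (absolutely convergent) has_sum.\<close>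

definition lhs_model_B_to_A :: "complex mat \<Rightarrow> bool" where
  "lhs_model_B_to_A r \<longleftrightarrow>
     (\<exists>(P :: nat \<Rightarrow> real) (\<sigma> :: nat \<Rightarrow> complex mat) (resp :: complex mat list \<Rightarrow> nat \<Rightarrow> nat \<Rightarrow> real).
        (\<forall>l. P l \<ge> 0) \<and> (P has_sum 1) UNIV \<and> (\<forall>l. qubit_state (\<sigma> l)) \<and>
        (\<forall>B l. qubit_povm B \<longrightarrow> (\<forall>b<length B. resp B l b \<ge> 0) \<and> (\<Sum>b<length B. resp B l b) = 1) \<and>
        (\<forall>A B a b. qubit_povm A \<longrightarrow> qubit_povm B \<longrightarrow> a < length A \<longrightarrow> b < length B \<longrightarrow>
           ((\<lambda>l. complex_of_real (P l) * mtrace (\<sigma> l * (A ! a)) * complex_of_real (resp B l b))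
              has_sum mtrace (kron (A ! a) (B ! b) * r)) UNIV))"

definition lhs_model_A_to_B :: "complex mat \<Rightarrow> bool" where
  "lhs_model_A_to_B r \<longleftrightarrow>
     (\<exists>(P :: nat \<Rightarrow> real) (\<sigma> :: nat \<Rightarrow> complex mat) (resp :: complex mat list \<Rightarrow> nat \<Rightarrow> nat \<Rightarrow> real).
        (\<forall>l. P l \<ge> 0) \<and> (P has_sum 1) UNIV \<and> (\<forall>l. qubit_state (\<sigma> l)) \<and>
        (\<forall>A l. qubit_povm A \<longrightarrow> (\<forall>a<length A. resp A l a \<ge> 0) \<and> (\<Sum>a<length A. resp A l a) = 1) \<and>
        (\<forall>A B a b. qubit_povm A \<longrightarrow> qubit_povm B \<longrightarrow> a < length A \<longrightarrow> b < length B \<longrightarrow>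
           ((\<lambda>l. complex_of_real (P l) * complex_of_real (resp A l a) * mtrace (\<sigma> l * (B ! b)))
              has_sum mtrace (kron (A ! a) (B ! b) * r)) UNIV))"

definition steerable_B_to_A :: "complex mat \<Rightarrow> bool" where
  "steerable_B_to_A r \<longleftrightarrow> \<not> lhs_model_B_to_A r"

definition steerable_A_to_B :: "complex mat \<Rightarrow> bool" where
  "steerable_A_to_B r \<longleftrightarrow> \<not> lhs_model_A_to_B r"

end

theory Submission
  imports Defs
begin

lemma has_sum_fsum:
  fixes f :: "'i \<Rightarrow> 'a \<Rightarrow> 'b::topological_comm_monoid_add"
  assumes "finite I" "\<And>i. i \<in> I \<Longrightarrow> (f i has_sum a i) A"
  shows "((\<lambda>x. \<Sum>i\<in>I. f i x) has_sum (\<Sum>i\<in>I. a i)) A"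
  using assms
proof (induction I rule: finite_induct)
  case empty then show ?case by simp
next
  case (insert j I)
  have "((\<lambda>x. f j x + (\<Sum>i\<in>I. f i x)) has_sum (a j + (\<Sum>i\<in>I. a i))) A"
    by (rule has_sum_add) (use insert in auto)
  then show ?case using insert by simp
qed

definition kap :: "nat \<Rightarrow> nat \<Rightarrow> nat \<Rightarrow> complex" where
  "kap i j e = (if i = 0 \<and> j = 0 then (if e = 0 then 1 else 0)
     else if i = 1 \<and> j = 1 then (if e = 1 then 1 else 0)
     else if i = 0 then (if e = 0 \<or> e = 1 then (-1 + \<i>)/2 else if e = 2 then 1 else - \<i>)
     else (if e = 0 \<or> e = 1 then (-1 - \<i>)/2 else if e = 2 then 1 else \<i>))"

definition recf :: "(nat \<Rightarrow> complex) \<Rightarrow> nat \<Rightarrow> nat \<Rightarrow> complex" where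
  "recf t i j = (\<Sum>e<4. kap i j e * t e)"

lemma sum4: "(\<Sum>e<(4::nat). g e) = g 0 + g 1 + g 2 + (g 3 :: 'a::comm_monoid_add)"
  by (simp add: numeral_eq_Suc lessThan_Suc add.assoc add.commute add.left_commute)
lemma sum2: "(\<Sum>e<(2::nat). g e) = g 0 + (g 1 :: 'a::comm_monoid_add)"
  by (simp add: numeral_eq_Suc lessThan_Suc add.commute)
lemma sum2': "(\<Sum>e=0..<(2::nat). g e) = g 0 + (g 1 :: 'a::comm_monoid_add)"
  by (simp add: numeral_eq_Suc add.commute)

lemma recf_cmult: "recf (\<lambda>e. c * t e) i j = c * recf t i j"
  by (simp add: recf_def sum_distrib_left mult_ac)

lemma recf_multr: "recf (\<lambda>e. t e * c) i j = recf t i j * c"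
  unfolding recf_def sum_distrib_right by (simp add: mult_ac)

lemma recf_swap: "recf (\<lambda>e. recf (\<lambda>f. T e f) b b') i j = recf (\<lambda>f. recf (\<lambda>e. T e f) i j) b b'"
  unfolding recf_def sum4 by (simp add: algebra_simps)

lemma recf_has_sum:
  assumes "\<And>e. e < 4 \<Longrightarrow> (h e has_sum t e) A"
  shows "((\<lambda>x. recf (\<lambda>e. h e x) i j) has_sum recf t i j) A"
  unfolding recf_def
  by (rule has_sum_fsum) (auto intro: has_sum_cmult_right assms)

definition mat2 :: "complex \<Rightarrow> complex \<Rightarrow> complex \<Rightarrow> complex \<Rightarrow> complex mat" where
  "mat2 a b c d = mat 2 2 (\<lambda>(i,j). if i = 0 then (if j = 0 then a else b) else (if j = 0 then c else d))"

definition Eff :: "nat \<Rightarrow> complex mat" where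
  "Eff e = (if e = 0 then mat2 1 0 0 0 else if e = 1 then mat2 0 0 0 1
     else if e = 2 then mat2 (1/2) (1/2) (1/2) (1/2) else mat2 (1/2) (-\<i>/2) (\<i>/2) (1/2))"

lemma mtrace2: "A \<in> carrier_mat 2 2 \<Longrightarrow> B \<in> carrier_mat 2 2 \<Longrightarrow>
  mtrace (A * B) = A$$(0,0)*B$$(0,0) + A$$(0,1)*B$$(1,0) + A$$(1,0)*B$$(0,1) + A$$(1,1)*B$$(1,1)"
  by (simp add: mtrace_def sum2 sum2' scalar_prod_def algebra_simps)

lemma mat2_idx[simp]: "mat2 a b c d $$ (0,0) = a" "mat2 a b c d $$ (0,1) = b"
  "mat2 a b c d $$ (1,0) = c" "mat2 a b c d $$ (1,1) = d"
  "mat2 a b c d $$ (0,Suc 0) = b"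
  "mat2 a b c d $$ (Suc 0,0) = c" "mat2 a b c d $$ (Suc 0,Suc 0) = d"
  "dim_row (mat2 a b c d) = 2" "dim_col (mat2 a b c d) = 2" "mat2 a b c d \<in> carrier_mat 2 2"
  by (simp_all add: mat2_def)

lemma Eff_carrier: "Eff e \<in> carrier_mat 2 2"
  by (simp add: Eff_def mat2_def)

lemma Eff_idx: "Eff 0 = mat2 1 0 0 0" "Eff 1 = mat2 0 0 0 1" "Eff 2 = mat2 (1/2) (1/2) (1/2) (1/2)"
  "Eff 3 = mat2 (1/2) (-\<i>/2) (\<i>/2) (1/2)"
  "Eff (Suc 0) = mat2 0 0 0 1" "Eff (Suc (Suc 0)) = mat2 (1/2) (1/2) (1/2) (1/2)"
  "Eff (Suc (Suc (Suc 0))) = mat2 (1/2) (-\<i>/2) (\<i>/2) (1/2)"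
  by (simp_all add: Eff_def)

lemma R1: assumes "W \<in> carrier_mat 2 2" "i < 2" "j < 2"
  shows "recf (\<lambda>e. mtrace (W * Eff e)) i j = W $$ (i,j)"
proof -
  have "i = 0 \<or> i = 1" "j = 0 \<or> j = 1" using assms by auto
  then show ?thesis using assms(1)
    apply (simp only: recf_def sum4 mtrace2 Eff_carrier Eff_idx)
    apply (elim disjE)
       apply (simp_all add: kap_def)
     apply (simp_all add: complex_eq_iff field_simps)
    done
qed

definition Wm :: "complex mat \<Rightarrow> complex mat \<Rightarrow> complex mat" where
  "Wm r F = mat 2 2 (\<lambda>(i,j). \<Sum>b<2. \<Sum>b'<2. r$$(2*i+b,2*j+b') * F$$(b',b))"
definition Vm :: "complex mat \<Rightarrow> nat \<Rightarrow> nat \<Rightarrow> complex mat" where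
  "Vm r i j = mat 2 2 (\<lambda>(b,b'). r$$(2*i+b,2*j+b'))"

lemma sum4': "(\<Sum>e=0..<(4::nat). g e) = g 0 + g 1 + g 2 + (g 3 :: 'a::comm_monoid_add)"
  by (simp add: numeral_eq_Suc add.assoc add.commute add.left_commute)

lemma TKabs: fixes E F r :: "nat \<times> nat \<Rightarrow> complex"
 shows "(\<Sum>i<4. \<Sum>k<4. E(i div 2, k div 2) * F(i mod 2, k mod 2) * r(k,i)) = (\<Sum>i<2. \<Sum>k<2. (\<Sum>b<2. \<Sum>b'<2. r(2*i+b,2*k+b') * F(b',b)) * E(k,i))"
  apply (simp only: sum4 sum2)
  apply simp
  apply (simp only: numeral_2_eq_2 numeral_3_eq_3)
  apply (simp add: algebra_simps)
  done

lemma TK: assumes "r \<in> carrier_mat 4 4" "E \<in> carrier_mat 2 2" "F \<in> carrier_mat 2 2"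
  shows "mtrace (kron E F * r) = mtrace (Wm r F * E)"
proof -
  have d: "dim_row (kron E F) = 4" "dim_col (kron E F) = 4" using assms by (auto simp: kron_def)
  have k: "\<And>i j. i < 4 \<Longrightarrow> j < 4 \<Longrightarrow> kron E F $$ (i,j) = E $$ (i div 2, j div 2) * F $$ (i mod 2, j mod 2)"
    using assms by (auto simp: kron_def)
  have "mtrace (kron E F * r) = (\<Sum>i<4. \<Sum>k<4. kron E F $$ (i,k) * r $$ (k,i))"
    using assms d by (simp add: mtrace_def scalar_prod_def atLeast0LessThan)
  also have "\<dots> = (\<Sum>i<4. \<Sum>k<4. E $$ (i div 2, k div 2) * F $$ (i mod 2, k mod 2) * r $$ (k,i))"
    by (intro sum.cong refl) (simp add: k)
  finally have 1: "mtrace (kron E F * r) = \<dots>" .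
  have 2: "mtrace (Wm r F * E) = (\<Sum>i<2. \<Sum>k<2. Wm r F $$ (i,k) * E $$ (k,i))"
    using assms by (simp add: mtrace_def scalar_prod_def atLeast0LessThan Wm_def)
  have 3: "(\<Sum>i<2. \<Sum>k<2. Wm r F $$ (i,k) * E$$(k,i)) = (\<Sum>i<2. \<Sum>k<2. (\<Sum>b<2. \<Sum>b'<2. r$$(2*i+b,2*k+b') * F$$(b',b)) * E$$(k,i))"
    by (intro sum.cong refl) (simp add: Wm_def)
  show ?thesis unfolding 1 2 3 by (rule TKabs[of "\<lambda>p. E $$ p" "\<lambda>p. F $$ p" "\<lambda>p. r $$ p"])
qed

lemma TK2: "i < 2 \<Longrightarrow> j < 2 \<Longrightarrow> F \<in> carrier_mat 2 2 \<Longrightarrow> Wm r F $$ (i,j) = mtrace (Vm r i j * F)"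
  by (simp add: Wm_def Vm_def mtrace2 sum2 algebra_simps)

lemma R2: assumes "r \<in> carrier_mat 4 4" "i < 2" "j < 2" "b < 2" "b' < 2"
  shows "recf (\<lambda>f. recf (\<lambda>e. mtrace (kron (Eff e) (Eff f) * r)) i j) b b' = r$$(2*i+b,2*j+b')"
proof -
  have "recf (\<lambda>e. mtrace (kron (Eff e) (Eff f) * r)) i j = mtrace (Vm r i j * Eff f)" for f
  proof -
    have "recf (\<lambda>e. mtrace (kron (Eff e) (Eff f) * r)) i j = recf (\<lambda>e. mtrace (Wm r (Eff f) * Eff e)) i j"
      using assms by (simp add: TK Eff_carrier)
    also have "\<dots> = Wm r (Eff f) $$ (i,j)" by (rule R1) (use assms in \<open>auto simp: Wm_def\<close>)
    finally show ?thesis using assms by (simp add: TK2 Eff_carrier)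
  qed
  then have "recf (\<lambda>f. recf (\<lambda>e. mtrace (kron (Eff e) (Eff f) * r)) i j) b b' = recf (\<lambda>f. mtrace (Vm r i j * Eff f)) b b'"
    by simp
  also have "\<dots> = Vm r i j $$ (b,b')" by (rule R1) (use assms in \<open>auto simp: Vm_def\<close>)
  finally show ?thesis using assms by (simp add: Vm_def)
qed

lemma psd_rank1:
  assumes "c \<ge> 0" "a = of_real c * ua * cnj ua" "b = of_real c * ua * cnj ub"
    "c' = of_real c * ub * cnj ua" "d = of_real c * ub * cnj ub"
  shows "psd 2 (mat2 a b c' d)"
  unfolding psd_def
proof (intro conjI ballI)
  show "mat2 a b c' d \<in> carrier_mat 2 2" by simp
  fix v :: "complex vec" assume "v \<in> carrier_vec 2"
  define z where "z = cnj ua * v$0 + cnj ub * v$1"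
  have q: "(\<Sum>i<2. \<Sum>j<2. cnj (v $ i) * mat2 a b c' d $$ (i, j) * v $ j) = of_real c * (cnj z * z)"
    by (simp add: sum2 assms z_def algebra_simps)
  have "cnj z * z = of_real ((cmod z)^2)" by (metis complex_norm_square mult.commute of_real_power)
  then show "let q = \<Sum>i<2. \<Sum>j<2. cnj (v $ i) * mat2 a b c' d $$ (i, j) * v $ j in Im q = 0 \<and> 0 \<le> Re q"
    unfolding q Let_def using assms(1) by simp
qed

definition Mx2 :: "complex mat" where "Mx2 = mat2 (1/2) (-1/2) (-1/2) (1/2)"
definition My2 :: "complex mat" where "My2 = mat2 (1/2) (\<i>/2) (-\<i>/2) (1/2)"
definition Mz :: "complex mat list" where "Mz = [Eff 0, Eff 1]"
definition Mx :: "complex mat list" where "Mx = [Eff 2, Mx2]"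
definition My :: "complex mat list" where "My = [Eff 3, My2]"

lemma psd_effs: "psd 2 (Eff 0)" "psd 2 (Eff 1)" "psd 2 (Eff 2)" "psd 2 (Eff 3)" "psd 2 Mx2" "psd 2 My2"
  unfolding Eff_idx Mx2_def My2_def
       apply (rule psd_rank1[where c=1 and ua=1 and ub=0]; simp)
      apply (rule psd_rank1[where c=1 and ua=0 and ub=1]; simp)
     apply (rule psd_rank1[where c="1/2" and ua=1 and ub=1]; simp)
    apply (rule psd_rank1[where c="1/2" and ua=1 and ub="\<i>"]; simp)
   apply (rule psd_rank1[where c="1/2" and ua=1 and ub="-1"]; simp)
  apply (rule psd_rank1[where c="1/2" and ua=1 and ub="-\<i>"]; simp)
  done

lemma povm2: assumes "psd 2 E1" "psd 2 E2"
  "E1$$(0,0) + E2$$(0,0) = 1" "E1$$(0,1) + E2$$(0,1) = 0" "E1$$(1,0) + E2$$(1,0) = 0" "E1$$(1,1) + E2$$(1,1) = 1"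
  shows "qubit_povm [E1, E2]"
  unfolding qubit_povm_def
proof (intro conjI allI impI)
  show "\<forall>E\<in>set [E1, E2]. psd 2 E" using assms by auto
  fix i j :: nat assume "i < 2" "j < 2"
  then have "i = 0 \<or> i = 1" "j = 0 \<or> j = 1" by auto
  have "(\<Sum>b<length [E1, E2]. [E1, E2] ! b $$ (i, j)) = E1 $$ (i,j) + E2 $$ (i,j)"
    by (simp add: sum2)
  moreover have "(1\<^sub>m 2 :: complex mat) $$ (i, j) = (if i = j then 1 else 0)"
    using \<open>i < 2\<close> \<open>j < 2\<close> by simp
  moreover have "E1 $$ (i,j) + E2 $$ (i,j) = (if i = j then 1 else 0)"
    using assms(3-6) \<open>i = 0 \<or> i = 1\<close> \<open>j = 0 \<or> j = 1\<close> by auto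
  ultimately show "(\<Sum>b<length [E1, E2]. [E1, E2] ! b $$ (i, j)) = 1\<^sub>m 2 $$ (i, j)"
    by simp
qed

lemma povms: "qubit_povm Mz" "qubit_povm Mx" "qubit_povm My"
  unfolding Mz_def Mx_def My_def
    apply (rule povm2[OF psd_effs(1) psd_effs(2)]; simp add: Eff_idx)
   apply (rule povm2[OF psd_effs(3) psd_effs(5)]; simp add: Eff_idx Mx2_def)
  apply (rule povm2[OF psd_effs(4) psd_effs(6)]; simp add: Eff_idx My2_def)
  done

definition povm :: "nat \<Rightarrow> complex mat list" where
  "povm f = (if f < 2 then Mz else if f = 2 then Mx else My)"
definition idx :: "nat \<Rightarrow> nat" where "idx f = (if f = 1 then 1 else 0)"

lemma povm_ok: "qubit_povm (povm f)" "idx f < length (povm f)"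
  by (auto simp: povm_def povms) (auto simp: povm_def idx_def Mz_def Mx_def My_def)

lemma povm_idx: "f < 4 \<Longrightarrow> povm f ! idx f = Eff f"
  by (cases f; cases "f - 1"; cases "f - 2"; auto simp: povm_def idx_def Mz_def Mx_def My_def numeral_2_eq_2 numeral_3_eq_3)

definition kf :: "(nat \<Rightarrow> nat \<Rightarrow> complex) \<Rightarrow> (nat \<Rightarrow> nat \<Rightarrow> complex) \<Rightarrow> (nat \<Rightarrow> nat \<Rightarrow> complex) \<Rightarrow> complex" where
  "kf X Y V = (\<Sum>i<2. \<Sum>b<2. \<Sum>j<2. \<Sum>b'<2. cnj (V i b) * X i j * Y b b' * V j b')"
definition qf :: "(nat \<Rightarrow> nat \<Rightarrow> complex) \<Rightarrow> (nat \<Rightarrow> complex) \<Rightarrow> complex" where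
  "qf X w = (\<Sum>i<2. \<Sum>j<2. cnj (w i) * X i j * w j)"
definition C2 :: "(nat \<Rightarrow> nat \<Rightarrow> complex) \<Rightarrow> bool" where
  "C2 Y \<longleftrightarrow> Im (Y 0 0) = 0 \<and> Re (Y 0 0) \<ge> 0 \<and> Im (Y 1 1) = 0 \<and> Re (Y 1 1) \<ge> 0 \<and>
     Y 1 0 = cnj (Y 0 1) \<and> (cmod (Y 0 1))^2 \<le> Re (Y 0 0) * Re (Y 1 1)"

lemma kf_decomp:
  assumes "Y 0 0 = y0 * cnj y0" "Y 0 1 = y0 * cnj y1" "Y 1 0 = y1 * cnj y0" "Y 1 1 = y1 * cnj y1 + d"
  shows "kf X Y V = qf X (\<lambda>i. cnj y0 * V i 0 + cnj y1 * V i 1) + d * qf X (\<lambda>i. V i 1)"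
  unfolding kf_def qf_def sum2 assms by (simp add: algebra_simps)

lemma kf_swap: "kf X Y V = kf Y X (\<lambda>b i. V i b)"
  unfolding kf_def sum2 by (simp add: algebra_simps)

lemma qf_transpose: "qf (\<lambda>i j. X j i) w = qf X (\<lambda>i. cnj (w i))"
  unfolding qf_def sum2 by (simp add: algebra_simps)

lemma qf_zero: "qf X (\<lambda>i. 0) = 0"
  unfolding qf_def by simp

lemma kf_nonneg:
  assumes X: "\<And>w. Re (qf X w) \<ge> 0" and Y: "C2 Y"
  shows "Re (kf X Y V) \<ge> 0"
proof -
  define \<alpha> where "\<alpha> = Re (Y 0 0)"
  define \<beta> where "\<beta> = Re (Y 1 1)"
  have Y00: "Y 0 0 = of_real \<alpha>" and Y11: "Y 1 1 = of_real \<beta>" using Y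
    by (auto simp: C2_def \<alpha>_def \<beta>_def complex_eq_iff)
  have a0: "\<alpha> \<ge> 0" "\<beta> \<ge> 0" using Y by (auto simp: C2_def \<alpha>_def \<beta>_def)
  have Y10: "Y 1 0 = cnj (Y 0 1)" and cs: "(cmod (Y 0 1))^2 \<le> \<alpha> * \<beta>"
    using Y by (auto simp: C2_def \<alpha>_def \<beta>_def)
  show ?thesis
  proof (cases "\<alpha> = 0")
    case True
    then have "Y 0 1 = 0" using cs by simp
    then have "kf X Y V = qf X (\<lambda>i. cnj 0 * V i 0 + cnj 0 * V i 1) + of_real \<beta> * qf X (\<lambda>i. V i 1)"
      by (intro kf_decomp) (use Y00 Y11 Y10 True in \<open>auto simp: One_nat_def\<close>)
    then have "Re (kf X Y V) = \<beta> * Re (qf X (\<lambda>i. V i 1))" by (simp add: qf_zero)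
    then show ?thesis using a0 X by simp
  next
    case False
    then have ap: "\<alpha> > 0" using a0 by simp
    define s where "s = sqrt \<alpha>"
    have sp: "s > 0" "s * s = \<alpha>" using ap by (auto simp: s_def)
    define y0 where "y0 = complex_of_real s"
    define y1 where "y1 = Y 1 0 / complex_of_real s"
    define d where "d = \<beta> - (cmod (Y 0 1))^2 / \<alpha>"
    have dp: "d \<ge> 0" using cs ap by (simp add: d_def field_simps)
    have e1: "Y 0 0 = y0 * cnj y0" using sp by (simp add: Y00 y0_def flip: of_real_mult)
    have e2: "Y 0 1 = y0 * cnj y1" using sp Y10 by (simp add: y0_def y1_def)
    have e3: "Y 1 0 = y1 * cnj y0" using sp by (simp add: y0_def y1_def)
    have "y1 * cnj y1 = of_real ((cmod (Y 1 0))^2 / \<alpha>)"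
      using sp by (simp add: y1_def complex_norm_square[symmetric] flip: of_real_mult)
    also have "cmod (Y 1 0) = cmod (Y 0 1)" using Y10 by simp
    finally have yy: "y1 * cnj y1 = of_real ((cmod (Y 0 1))^2 / \<alpha>)" .
    have "y1 * cnj y1 + of_real d = of_real ((cmod (Y 0 1))^2 / \<alpha> + d)" unfolding yy by simp
    also have "\<dots> = of_real \<beta>" by (simp add: d_def)
    finally have e4: "Y 1 1 = y1 * cnj y1 + of_real d" using Y11 by simp
    have "kf X Y V = qf X (\<lambda>i. cnj y0 * V i 0 + cnj y1 * V i 1) + of_real d * qf X (\<lambda>i. V i 1)"
      by (rule kf_decomp[OF e1 e2 e3 e4])
    then have "Re (kf X Y V) = Re (qf X (\<lambda>i. cnj y0 * V i 0 + cnj y1 * V i 1)) + d * Re (qf X (\<lambda>i. V i 1))"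
      by simp
    then show ?thesis using X dp by (metis add_nonneg_nonneg mult_nonneg_nonneg)
  qed
qed

lemma recf_vals:
  "recf t 0 0 = t 0" "recf t 1 1 = t 1"
  "recf t 0 1 = ((2 * t 2 - t 0 - t 1) - \<i> * (2 * t 3 - t 0 - t 1)) / 2"
  "recf t 1 0 = ((2 * t 2 - t 0 - t 1) + \<i> * (2 * t 3 - t 0 - t 1)) / 2"
  "recf t (Suc 0) (Suc 0) = t 1"
  "recf t 0 (Suc 0) = ((2 * t 2 - t 0 - t 1) - \<i> * (2 * t 3 - t 0 - t 1)) / 2"
  "recf t (Suc 0) 0 = ((2 * t 2 - t 0 - t 1) + \<i> * (2 * t 3 - t 0 - t 1)) / 2"
  by (simp_all add: recf_def sum4 kap_def field_simps)

lemma C2_transpose: "C2 Y \<Longrightarrow> C2 (\<lambda>b b'. Y b' b)"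
  unfolding C2_def by (metis complex_cnj_cnj complex_mod_cnj mult.commute)

lemma sq_le1: "0 \<le> (t::real) \<Longrightarrow> t \<le> 1 \<Longrightarrow> (2*t-1)^2 \<le> 1"
proof -
  assume "0 \<le> t" "t \<le> 1"
  then have "t * (t - 1) \<le> 0" by (simp add: mult_nonneg_nonpos)
  then show ?thesis by (simp add: power2_eq_square algebra_simps)
qed

lemma real_bound:
  fixes \<mu> t0 t2 t3 :: real
  assumes "0 \<le> \<mu>" "\<mu>*\<mu>*3 \<le> 1" "0 \<le> t0" "t0 \<le> 1" "0 \<le> t2" "t2 \<le> 1" "0 \<le> t3" "t3 \<le> 1"
  shows "(\<mu>*(2*t2-1)/2)^2 + (\<mu>*(2*t3-1)/2)^2 \<le> (\<mu>*t0 + (1-\<mu>)/2) * (\<mu>*(1-t0) + (1-\<mu>)/2)"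
proof -
  have a: "\<mu>*\<mu>*(2*t0-1)^2 \<le> \<mu>*\<mu>" "\<mu>*\<mu>*(2*t2-1)^2 \<le> \<mu>*\<mu>" "\<mu>*\<mu>*(2*t3-1)^2 \<le> \<mu>*\<mu>"
    using sq_le1[of t0] sq_le1[of t2] sq_le1[of t3] assms
    by (auto intro!: mult_left_le simp: mult_nonneg_nonneg)
  have e: "(\<mu>*t0 + (1-\<mu>)/2) * (\<mu>*(1-t0) + (1-\<mu>)/2) = (1 - \<mu>*\<mu>*(2*t0-1)^2) / 4"
    by (simp add: power2_eq_square field_simps)
  have f: "(\<mu>*(2*t2-1)/2)^2 + (\<mu>*(2*t3-1)/2)^2 = (\<mu>*\<mu>*(2*t2-1)^2 + \<mu>*\<mu>*(2*t3-1)^2) / 4"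
    by (simp add: power2_eq_square field_simps)
  have "\<mu>*\<mu>*(2*t2-1)^2 + \<mu>*\<mu>*(2*t3-1)^2 \<le> 1 - \<mu>*\<mu>*(2*t0-1)^2" using a assms(2) by linarith
  then show ?thesis unfolding e f by (intro divide_right_mono) auto
qed

definition Hm :: "real \<Rightarrow> (nat \<Rightarrow> real) \<Rightarrow> nat \<Rightarrow> nat \<Rightarrow> complex" where
  "Hm \<mu> t b b' = of_real \<mu> * recf (\<lambda>f. of_real (t f)) b b' + of_real (1-\<mu>) * (if b = b' then 1/2 else 0)"

lemma C2_Hm:
  assumes "0 \<le> \<mu>" "\<mu>*\<mu>*3 \<le> 1" "\<And>f. 0 \<le> t f" "\<And>f. t f \<le> 1" "t 0 + t 1 = 1"
  shows "C2 (Hm \<mu> t)"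
proof -
  have m1: "\<mu> \<le> 1"
  proof (rule ccontr)
    assume "\<not> \<mu> \<le> 1"
    then have "1 * 1 < \<mu> * \<mu>" by (intro mult_strict_mono) auto
    then show False using assms(2) by linarith
  qed
  have t1: "t 1 = 1 - t 0" "t (Suc 0) = 1 - t 0" using assms(5) by simp_all
  have h00: "Hm \<mu> t 0 0 = of_real (\<mu> * t 0 + (1-\<mu>)/2)" by (simp add: Hm_def recf_vals)
  have h11: "Hm \<mu> t 1 1 = of_real (\<mu> * (1 - t 0) + (1-\<mu>)/2)" by (simp add: Hm_def recf_vals t1)
  have h01: "Hm \<mu> t 0 1 = Complex (\<mu>*(2*t 2-1)/2) (- (\<mu>*(2*t 3-1)/2))"
    by (simp add: Hm_def recf_vals t1 complex_eq_iff field_simps)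
  have h10: "Hm \<mu> t 1 0 = Complex (\<mu>*(2*t 2-1)/2) (\<mu>*(2*t 3-1)/2)"
    by (simp add: Hm_def recf_vals t1 complex_eq_iff field_simps)
  have b: "(\<mu>*(2*t 2-1)/2)^2 + (\<mu>*(2*t 3-1)/2)^2 \<le> (\<mu>*t 0 + (1-\<mu>)/2) * (\<mu>*(1-t 0) + (1-\<mu>)/2)"
    by (rule real_bound) (use assms in auto)
  have p: "0 \<le> \<mu> * t 0 + (1-\<mu>)/2" "0 \<le> \<mu> * (1 - t 0) + (1-\<mu>)/2"
    using assms(1) assms(3)[of 0] assms(4)[of 0] m1 by (auto intro!: add_nonneg_nonneg mult_nonneg_nonneg)
  show ?thesis unfolding C2_def
    using b p by (simp only: h00 h11 h01 h10) (simp add: cmod_power2 complex_eq_iff)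
qed

lemma C2_Hm_T:
  assumes "0 \<le> \<mu>" "\<mu>*\<mu>*3 \<le> 1" "\<And>f. 0 \<le> t f" "\<And>f. t f \<le> 1" "t 0 + t 1 = 1"
  shows "C2 (\<lambda>b b'. Hm \<mu> t b' b)"
  using C2_transpose[OF C2_Hm[OF assms]] .

lemma psd_qf: assumes "psd 2 A" shows "0 \<le> Re (qf (\<lambda>i j. A $$ (i,j)) w)"
proof -
  have "vec 2 w \<in> carrier_vec 2" by simp
  then have "0 \<le> Re (\<Sum>i<2. \<Sum>j<2. cnj (vec 2 w $ i) * A $$ (i, j) * vec 2 w $ j)"
    using assms unfolding psd_def Let_def by blast
  moreover have "(\<Sum>i<2. \<Sum>j<2. cnj (vec 2 w $ i) * A $$ (i, j) * vec 2 w $ j) = qf (\<lambda>i j. A $$ (i,j)) w"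
    unfolding qf_def by (intro sum.cong refl) simp
  ultimately show ?thesis by metis
qed

lemma sum_split4: "(\<Sum>r<(4::nat). g r) = (\<Sum>i<2. \<Sum>b<2. g (2*i+b) :: 'a::comm_monoid_add)"
  by (simp add: sum4 sum2 add.assoc)

lemma dm2: "(b::nat) < 2 \<Longrightarrow> (2*i+b) div 2 = i" "(b::nat) < 2 \<Longrightarrow> (2*i+b) mod 2 = b"
  by auto

lemma lt4: "(i::nat) < 2 \<Longrightarrow> b < 2 \<Longrightarrow> 2*i+b < 4"
  by auto

lemma resp_bounds:
  assumes "\<forall>B l. qubit_povm B \<longrightarrow> (\<forall>b<length B. resp B l b \<ge> 0) \<and> (\<Sum>b<length B. resp B l b) = (1::real)"
  shows "0 \<le> resp (povm f) l (idx f)" "resp (povm f) l (idx f) \<le> 1"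
    "resp (povm 0) l (idx 0) + resp (povm 1) l (idx 1) = 1"
proof -
  have L: "length (povm f) = 2" for f by (simp add: povm_def Mz_def Mx_def My_def)
  have A: "0 \<le> resp (povm f) l b" if "b < 2" for f b using assms povm_ok(1)[of f] that L by auto
  have S: "resp (povm f) l 0 + resp (povm f) l 1 = 1" for f
  proof -
    have "(\<Sum>b<length (povm f). resp (povm f) l b) = 1" using assms povm_ok(1)[of f] by blast
    then show ?thesis using L[of f] by (simp add: sum2)
  qed
  have "idx f = 0 \<or> idx f = 1" by (simp add: idx_def)
  then show "0 \<le> resp (povm f) l (idx f)" "resp (povm f) l (idx f) \<le> 1"
    using A[of 0 f] A[of 1 f] S[of f] by auto
  show "resp (povm 0) l (idx 0) + resp (povm 1) l (idx 1) = 1"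
    using S[of 0] by (simp add: idx_def povm_def)
qed

lemma eig_neg_form:
  assumes "M \<in> carrier_mat 4 4" "has_neg_eigenvalue M"
  shows "\<exists>v. v \<in> carrier_vec 4 \<and> Re (\<Sum>r<4. \<Sum>s<4. cnj (v $ r) * M $$ (r, s) * v $ s) < 0"
proof -
  obtain x :: real and v where x: "x < 0" and v: "v \<in> carrier_vec 4" "v \<noteq> 0\<^sub>v 4"
     and ev: "M *\<^sub>v v = complex_of_real x \<cdot>\<^sub>v v"
    using assms unfolding has_neg_eigenvalue_def eigenvalue_def eigenvector_def by auto
  have "(\<Sum>r<4. \<Sum>s<4. cnj (v $ r) * M $$ (r, s) * v $ s) = (\<Sum>r<4. cnj (v $ r) * (M *\<^sub>v v) $ r)"
    using assms(1) v by (simp add: scalar_prod_def sum_distrib_left atLeast0LessThan mult.assoc)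
  also have "\<dots> = (\<Sum>r<4. complex_of_real (x * (cmod (v $ r))^2))"
  proof (intro sum.cong refl)
    fix r assume "r \<in> {..<4::nat}"
    then have "cnj (v $ r) * (M *\<^sub>v v) $ r = of_real x * (v $ r * cnj (v $ r))"
      using v by (simp add: ev mult_ac)
    also have "v $ r * cnj (v $ r) = of_real ((cmod (v $ r))^2)" by (rule complex_norm_square[symmetric])
    finally show "cnj (v $ r) * (M *\<^sub>v v) $ r = complex_of_real (x * (cmod (v $ r))^2)" by simp
  qed
  finally have e: "Re (\<Sum>r<4. \<Sum>s<4. cnj (v $ r) * M $$ (r, s) * v $ s) = x * (\<Sum>r<4. (cmod (v $ r))^2)"
    by (simp add: sum_distrib_left)
  obtain r where r: "r < 4" "v $ r \<noteq> 0"
    using v by (metis eq_vecI carrier_vecD index_zero_vec(1,2))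
  have "0 < (\<Sum>r<4. (cmod (v $ r))^2)"
  proof -
    have "(cmod (v $ r))^2 \<le> (\<Sum>r<4. (cmod (v $ r))^2)"
      using r by (intro member_le_sum) auto
    moreover have "0 < (cmod (v $ r))^2" using r by simp
    ultimately show ?thesis by linarith
  qed
  then have "Re (\<Sum>r<4. \<Sum>s<4. cnj (v $ r) * M $$ (r, s) * v $ s) < 0"
    unfolding e using x by (simp add: mult_neg_pos)
  then show ?thesis using v by blast
qed

lemma has_sum_eq: "(f has_sum x) A \<Longrightarrow> (\<And>l. f l = g l) \<Longrightarrow> x = y \<Longrightarrow> (g has_sum y) A"
proof -
  assume "(f has_sum x) A" "\<And>l. f l = g l" "x = y"
  moreover have "f = g" by (rule ext) fact
  ultimately show ?thesis by simp
qed

lemma part1: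
  fixes \<rho> :: "complex mat" and \<mu> :: real
  assumes rho: "two_qubit_state \<rho>" and mu: "0 \<le> \<mu>" "\<mu>*\<mu>*3 \<le> 1" and lhs: "lhs_model_B_to_A \<rho>"
  shows "\<not> has_neg_eigenvalue (ptranspose_B (complex_of_real \<mu> \<cdot>\<^sub>m \<rho> + complex_of_real (1 - \<mu>) \<cdot>\<^sub>m
               kron (ptrace_B \<rho>) ((1 / 2) \<cdot>\<^sub>m 1\<^sub>m 2)))"
    (is "\<not> has_neg_eigenvalue ?M")
proof
  assume neg: "has_neg_eigenvalue ?M"
  have Mc: "?M \<in> carrier_mat 4 4" by (simp add: ptranspose_B_def)
  obtain v where v: "v \<in> carrier_vec 4" and Qneg: "Re (\<Sum>r<4. \<Sum>s<4. cnj (v$r) * ?M $$ (r,s) * v$s) < 0"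
    using eig_neg_form[OF Mc neg] by blast
  obtain P :: "nat \<Rightarrow> real" and \<sigma> :: "nat \<Rightarrow> complex mat" and resp :: "complex mat list \<Rightarrow> nat \<Rightarrow> nat \<Rightarrow> real" where conj: "(\<forall>l. P l \<ge> 0) \<and> (P has_sum 1) UNIV \<and> (\<forall>l. qubit_state (\<sigma> l)) \<and>
        (\<forall>B l. qubit_povm B \<longrightarrow> (\<forall>b<length B. resp B l b \<ge> 0) \<and> (\<Sum>b<length B. resp B l b) = 1) \<and>
        (\<forall>A B a b. qubit_povm A \<longrightarrow> qubit_povm B \<longrightarrow> a < length A \<longrightarrow> b < length B \<longrightarrow>
           ((\<lambda>l. complex_of_real (P l) * mtrace (\<sigma> l * (A ! a)) * complex_of_real (resp B l b))
              has_sum mtrace (kron (A ! a) (B ! b) * \<rho>)) UNIV)"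
    using lhs unfolding lhs_model_B_to_A_def by (elim exE) (erule that)
  note P0 = conj[THEN conjunct1]
  note sc0 = conj[THEN conjunct2, THEN conjunct2, THEN conjunct1]
  note R = conj[THEN conjunct2, THEN conjunct2, THEN conjunct2, THEN conjunct1]
  note model = conj[THEN conjunct2, THEN conjunct2, THEN conjunct2, THEN conjunct2]
  have rc: "\<rho> \<in> carrier_mat 4 4" using rho by (simp add: two_qubit_state_def density_def psd_def)
  have spsd: "psd 2 (\<sigma> l)" for l using sc0 by (simp add: qubit_state_def density_def)
  have sc: "\<sigma> l \<in> carrier_mat 2 2" for l using spsd[of l] by (simp add: psd_def)
  define cP where "cP l = complex_of_real (P l)" for l
  define t where "t l f = resp (povm f) l (idx f)" for l f
  have H1: "((\<lambda>l. cP l * mtrace (\<sigma> l * Eff e) * complex_of_real (t l f)) has_sum mtrace (kron (Eff e) (Eff f) * \<rho>)) UNIV"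
    if "e < 4" "f < 4" for e f
    using model[rule_format, OF povm_ok(1)[of e] povm_ok(1)[of f] povm_ok(2)[of e] povm_ok(2)[of f]]
    by (simp add: cP_def t_def povm_idx that)
  define G where "G l = recf (\<lambda>f. complex_of_real (t l f))" for l
  have H2: "((\<lambda>l. cP l * \<sigma> l $$ (i,j) * G l b b') has_sum \<rho> $$ (2*i+b, 2*j+b')) UNIV"
    if "i<2" "j<2" "b<2" "b'<2" for i j b b'
  proof -
    have A: "((\<lambda>l. recf (\<lambda>f. recf (\<lambda>e. cP l * mtrace (\<sigma> l * Eff e) * complex_of_real (t l f)) i j) b b')
       has_sum recf (\<lambda>f. recf (\<lambda>e. mtrace (kron (Eff e) (Eff f) * \<rho>)) i j) b b') UNIV"
      by (intro recf_has_sum H1)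
    have C: "recf (\<lambda>f. recf (\<lambda>e. cP l * mtrace (\<sigma> l * Eff e) * complex_of_real (t l f)) i j) b b'
       = cP l * \<sigma> l $$ (i,j) * G l b b'" for l
    proof -
      have "recf (\<lambda>e. cP l * mtrace (\<sigma> l * Eff e) * complex_of_real (t l f)) i j = (cP l * \<sigma> l $$ (i,j)) * complex_of_real (t l f)" for f
      proof -
        have "recf (\<lambda>e. cP l * mtrace (\<sigma> l * Eff e) * complex_of_real (t l f)) i j
            = recf (\<lambda>e. (cP l * complex_of_real (t l f)) * mtrace (\<sigma> l * Eff e)) i j"
          by (simp add: mult_ac)
        also have "\<dots> = (cP l * complex_of_real (t l f)) * \<sigma> l $$ (i,j)"
          by (simp only: recf_cmult R1[OF sc that(1,2)])
        finally show ?thesis by (simp add: mult_ac)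
      qed
      then show ?thesis by (simp add: recf_cmult G_def)
    qed
    show ?thesis by (rule has_sum_eq[OF A C R2[OF rc that]])
  qed
  have tb: "0 \<le> t l f" "t l f \<le> 1" for l f using resp_bounds[OF R] by (auto simp: t_def)
  have tsum: "t l 0 + t l 1 = 1" for l using resp_bounds(3)[OF R] by (simp add: t_def)
  have G00: "G l 0 0 = of_real (t l 0)" and G11: "G l 1 1 = of_real (t l 1)" for l
    by (simp_all add: G_def recf_vals)
  define H where "H l b b' = Hm \<mu> (t l) b' b" for l b b'
  have Mentry: "?M $$ (2*i+b, 2*j+b') = of_real \<mu> * \<rho> $$ (2*i+b', 2*j+b) + of_real (1-\<mu>) *
     ((\<rho> $$ (2*i+0, 2*j+0) + \<rho> $$ (2*i+1, 2*j+1)) * (if b' = b then 1/2 else 0))"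
    if "i<2" "j<2" "b<2" "b'<2" for i j b b'
    using that rc by (simp add: ptranspose_B_def dm2 lt4 kron_def ptrace_B_def sum2)
  have HM: "((\<lambda>l. cP l * \<sigma> l $$ (i,j) * H l b b') has_sum ?M $$ (2*i+b, 2*j+b')) UNIV"
    if "i<2" "j<2" "b<2" "b'<2" for i j b b'
  proof -
    have a: "((\<lambda>l. of_real \<mu> * (cP l * \<sigma> l $$ (i,j) * G l b' b)) has_sum of_real \<mu> * \<rho> $$ (2*i+b', 2*j+b)) UNIV"
      by (rule has_sum_cmult_right) (rule H2; use that in auto)
    have c: "((\<lambda>l. of_real (1-\<mu>) * ((cP l * \<sigma> l $$ (i,j) * G l 0 0 + cP l * \<sigma> l $$ (i,j) * G l 1 1) * (if b' = b then 1/2 else 0)))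
       has_sum of_real (1-\<mu>) * ((\<rho> $$ (2*i+0, 2*j+0) + \<rho> $$ (2*i+1, 2*j+1)) * (if b' = b then 1/2 else 0))) UNIV"
      by (intro has_sum_cmult_right has_sum_cmult_left has_sum_add H2) (use that in auto)
    have e: "cP l * \<sigma> l $$ (i,j) * G l 0 0 + cP l * \<sigma> l $$ (i,j) * G l 1 1 = cP l * \<sigma> l $$ (i,j)" for l
    proof -
      have "cP l * \<sigma> l $$ (i,j) * G l 0 0 + cP l * \<sigma> l $$ (i,j) * G l 1 1 = cP l * \<sigma> l $$ (i,j) * (G l 0 0 + G l 1 1)"
        by (simp only: distrib_left)
      also have "G l 0 0 + G l 1 1 = 1" unfolding G00 G11 of_real_add[symmetric] tsum by simp
      finally show ?thesis by simp
    qed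
    have f: "of_real \<mu> * (cP l * \<sigma> l $$ (i,j) * G l b' b) + of_real (1-\<mu>) * ((cP l * \<sigma> l $$ (i,j) * G l 0 0 + cP l * \<sigma> l $$ (i,j) * G l 1 1) * (if b' = b then 1/2 else 0))
        = cP l * \<sigma> l $$ (i,j) * H l b b'" for l
      unfolding e unfolding H_def Hm_def G_def by (simp add: algebra_simps)
    show ?thesis by (rule has_sum_eq[OF has_sum_add[OF a c] f]) (rule Mentry[OF that, symmetric])
  qed
  define V where "V i b = v $ (2*i+b)" for i b
  have Qeq: "(\<Sum>r<4. \<Sum>s<4. cnj (v$r) * ?M $$ (r,s) * v$s) = (\<Sum>i<2. \<Sum>b<2. \<Sum>j<2. \<Sum>b'<2. cnj (V i b) * ?M $$ (2*i+b, 2*j+b') * V j b')"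
    unfolding V_def by (simp only: sum_split4)
  have Qsum: "((\<lambda>l. \<Sum>i<2. \<Sum>b<2. \<Sum>j<2. \<Sum>b'<2. cnj (V i b) * (cP l * \<sigma> l $$ (i,j) * H l b b') * V j b')
     has_sum (\<Sum>i<2. \<Sum>b<2. \<Sum>j<2. \<Sum>b'<2. cnj (V i b) * ?M $$ (2*i+b, 2*j+b') * V j b')) UNIV"
    by (intro has_sum_fsum has_sum_cmult_left has_sum_cmult_right HM) auto
  have Qfun: "(\<Sum>i<2. \<Sum>b<2. \<Sum>j<2. \<Sum>b'<2. cnj (V i b) * (cP l * \<sigma> l $$ (i,j) * H l b b') * V j b')
      = cP l * kf (\<lambda>i j. \<sigma> l $$ (i,j)) (H l) V" for l
    by (simp add: kf_def sum_distrib_left mult_ac)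
  have C2H: "C2 (H l)" for l
    unfolding H_def using C2_Hm_T[OF mu, of "t l"] tb tsum by blast
  have Qpos: "0 \<le> Re (cP l * kf (\<lambda>i j. \<sigma> l $$ (i,j)) (H l) V)" for l
    using kf_nonneg[OF psd_qf[OF spsd] C2H, of l l V] P0 by (simp add: cP_def)
  have "((\<lambda>l. Re (cP l * kf (\<lambda>i j. \<sigma> l $$ (i,j)) (H l) V)) has_sum Re (\<Sum>i<2. \<Sum>b<2. \<Sum>j<2. \<Sum>b'<2. cnj (V i b) * ?M $$ (2*i+b, 2*j+b') * V j b')) UNIV"
    by (rule has_sum_Re, rule has_sum_eq[OF Qsum Qfun refl])
  then have "0 \<le> Re (\<Sum>i<2. \<Sum>b<2. \<Sum>j<2. \<Sum>b'<2. cnj (V i b) * ?M $$ (2*i+b, 2*j+b') * V j b')"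
    by (rule has_sum_nonneg) (rule Qpos)
  then show False using Qneg unfolding Qeq by linarith
qed

lemma part2:
  fixes \<rho> :: "complex mat" and \<mu> :: real
  assumes rho: "two_qubit_state \<rho>" and mu: "0 \<le> \<mu>" "\<mu>*\<mu>*3 \<le> 1" and lhs: "lhs_model_A_to_B \<rho>"
  shows "\<not> has_neg_eigenvalue (ptranspose_B (complex_of_real \<mu> \<cdot>\<^sub>m \<rho> + complex_of_real (1 - \<mu>) \<cdot>\<^sub>m
               kron ((1 / 2) \<cdot>\<^sub>m 1\<^sub>m 2) (ptrace_A \<rho>)))"
    (is "\<not> has_neg_eigenvalue ?M")
proof
  assume neg: "has_neg_eigenvalue ?M"
  have Mc: "?M \<in> carrier_mat 4 4" by (simp add: ptranspose_B_def)
  obtain v where v: "v \<in> carrier_vec 4" and Qneg: "Re (\<Sum>r<4. \<Sum>s<4. cnj (v$r) * ?M $$ (r,s) * v$s) < 0"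
    using eig_neg_form[OF Mc neg] by blast
  obtain P :: "nat \<Rightarrow> real" and \<sigma> :: "nat \<Rightarrow> complex mat" and resp :: "complex mat list \<Rightarrow> nat \<Rightarrow> nat \<Rightarrow> real" where conj: "(\<forall>l. P l \<ge> 0) \<and> (P has_sum 1) UNIV \<and> (\<forall>l. qubit_state (\<sigma> l)) \<and>
        (\<forall>A l. qubit_povm A \<longrightarrow> (\<forall>a<length A. resp A l a \<ge> 0) \<and> (\<Sum>a<length A. resp A l a) = 1) \<and>
        (\<forall>A B a b. qubit_povm A \<longrightarrow> qubit_povm B \<longrightarrow> a < length A \<longrightarrow> b < length B \<longrightarrow>
           ((\<lambda>l. complex_of_real (P l) * complex_of_real (resp A l a) * mtrace (\<sigma> l * (B ! b)))
              has_sum mtrace (kron (A ! a) (B ! b) * \<rho>)) UNIV)"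
    using lhs unfolding lhs_model_A_to_B_def by (elim exE) (erule that)
  note P0 = conj[THEN conjunct1]
  note sc0 = conj[THEN conjunct2, THEN conjunct2, THEN conjunct1]
  note R = conj[THEN conjunct2, THEN conjunct2, THEN conjunct2, THEN conjunct1]
  note model = conj[THEN conjunct2, THEN conjunct2, THEN conjunct2, THEN conjunct2]
  have rc: "\<rho> \<in> carrier_mat 4 4" using rho by (simp add: two_qubit_state_def density_def psd_def)
  have spsd: "psd 2 (\<sigma> l)" for l using sc0 by (simp add: qubit_state_def density_def)
  have sc: "\<sigma> l \<in> carrier_mat 2 2" for l using spsd[of l] by (simp add: psd_def)
  define cP where "cP l = complex_of_real (P l)" for l
  define t where "t l f = resp (povm f) l (idx f)" for l f
  have H1: "((\<lambda>l. cP l * complex_of_real (t l e) * mtrace (\<sigma> l * Eff f)) has_sum mtrace (kron (Eff e) (Eff f) * \<rho>)) UNIV"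
    if "e < 4" "f < 4" for e f
    using model[rule_format, OF povm_ok(1)[of e] povm_ok(1)[of f] povm_ok(2)[of e] povm_ok(2)[of f]]
    by (simp add: cP_def t_def povm_idx that)
  define G where "G l = recf (\<lambda>f. complex_of_real (t l f))" for l
  have H2: "((\<lambda>l. cP l * G l i j * \<sigma> l $$ (b,b')) has_sum \<rho> $$ (2*i+b, 2*j+b')) UNIV"
    if "i<2" "j<2" "b<2" "b'<2" for i j b b'
  proof -
    have A: "((\<lambda>l. recf (\<lambda>e. recf (\<lambda>f. cP l * complex_of_real (t l e) * mtrace (\<sigma> l * Eff f)) b b') i j)
       has_sum recf (\<lambda>e. recf (\<lambda>f. mtrace (kron (Eff e) (Eff f) * \<rho>)) b b') i j) UNIV"
      by (intro recf_has_sum H1)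
    have C: "recf (\<lambda>e. recf (\<lambda>f. cP l * complex_of_real (t l e) * mtrace (\<sigma> l * Eff f)) b b') i j
       = cP l * G l i j * \<sigma> l $$ (b,b')" for l
    proof -
      have inner: "recf (\<lambda>f. cP l * complex_of_real (t l e) * mtrace (\<sigma> l * Eff f)) b b' = complex_of_real (t l e) * (cP l * \<sigma> l $$ (b,b'))" for e
      proof -
        have "recf (\<lambda>f. cP l * complex_of_real (t l e) * mtrace (\<sigma> l * Eff f)) b b'
            = (cP l * complex_of_real (t l e)) * \<sigma> l $$ (b,b')"
          by (simp only: recf_cmult R1[OF sc that(3,4)])
        then show ?thesis by (simp add: mult_ac)
      qed
      show ?thesis unfolding inner recf_multr G_def by (simp add: mult_ac)
    qed
    have V: "recf (\<lambda>e. recf (\<lambda>f. mtrace (kron (Eff e) (Eff f) * \<rho>)) b b') i j = \<rho> $$ (2*i+b, 2*j+b')"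
      unfolding recf_swap[of _ b b' i j] by (rule R2[OF rc that])
    show ?thesis by (rule has_sum_eq[OF A C V])
  qed
  have tb: "0 \<le> t l f" "t l f \<le> 1" for l f using resp_bounds[OF R] by (auto simp: t_def)
  have tsum: "t l 0 + t l 1 = 1" for l using resp_bounds(3)[OF R] by (simp add: t_def)
  have G00: "G l 0 0 = of_real (t l 0)" and G11: "G l 1 1 = of_real (t l 1)" for l
    by (simp_all add: G_def recf_vals)
  define H where "H l = Hm \<mu> (t l)" for l
  have Mentry: "?M $$ (2*i+b, 2*j+b') = of_real \<mu> * \<rho> $$ (2*i+b', 2*j+b) + of_real (1-\<mu>) *
     ((if i = j then 1/2 else 0) * (\<rho> $$ (2*0+b', 2*0+b) + \<rho> $$ (2*1+b', 2*1+b)))"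
    if "i<2" "j<2" "b<2" "b'<2" for i j b b'
    using that rc by (simp add: ptranspose_B_def dm2 lt4 kron_def ptrace_A_def sum2)
  have HM: "((\<lambda>l. cP l * H l i j * \<sigma> l $$ (b',b)) has_sum ?M $$ (2*i+b, 2*j+b')) UNIV"
    if "i<2" "j<2" "b<2" "b'<2" for i j b b'
  proof -
    have a: "((\<lambda>l. of_real \<mu> * (cP l * G l i j * \<sigma> l $$ (b',b))) has_sum of_real \<mu> * \<rho> $$ (2*i+b', 2*j+b)) UNIV"
      by (rule has_sum_cmult_right) (rule H2; use that in auto)
    have c: "((\<lambda>l. of_real (1-\<mu>) * ((if i = j then 1/2 else 0) * (cP l * G l 0 0 * \<sigma> l $$ (b',b) + cP l * G l 1 1 * \<sigma> l $$ (b',b))))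
       has_sum of_real (1-\<mu>) * ((if i = j then 1/2 else 0) * (\<rho> $$ (2*0+b', 2*0+b) + \<rho> $$ (2*1+b', 2*1+b)))) UNIV"
      by (intro has_sum_cmult_right has_sum_add H2) (use that in auto)
    have e: "cP l * G l 0 0 * \<sigma> l $$ (b',b) + cP l * G l 1 1 * \<sigma> l $$ (b',b) = cP l * \<sigma> l $$ (b',b)" for l
    proof -
      have "cP l * G l 0 0 * \<sigma> l $$ (b',b) + cP l * G l 1 1 * \<sigma> l $$ (b',b) = cP l * \<sigma> l $$ (b',b) * (G l 0 0 + G l 1 1)"
        by (simp only: distrib_left distrib_right mult_ac)
      also have "G l 0 0 + G l 1 1 = 1" unfolding G00 G11 of_real_add[symmetric] tsum by simp
      finally show ?thesis by simp
    qed
    have f: "of_real \<mu> * (cP l * G l i j * \<sigma> l $$ (b',b)) + of_real (1-\<mu>) * ((if i = j then 1/2 else 0) * (cP l * G l 0 0 * \<sigma> l $$ (b',b) + cP l * G l 1 1 * \<sigma> l $$ (b',b)))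
        = cP l * H l i j * \<sigma> l $$ (b',b)" for l
      unfolding e unfolding H_def Hm_def G_def by (simp add: algebra_simps)
    show ?thesis by (rule has_sum_eq[OF has_sum_add[OF a c] f]) (rule Mentry[OF that, symmetric])
  qed
  define V where "V i b = v $ (2*i+b)" for i b
  have Qeq: "(\<Sum>r<4. \<Sum>s<4. cnj (v$r) * ?M $$ (r,s) * v$s) = (\<Sum>i<2. \<Sum>b<2. \<Sum>j<2. \<Sum>b'<2. cnj (V i b) * ?M $$ (2*i+b, 2*j+b') * V j b')"
    unfolding V_def by (simp only: sum_split4)
  have Qsum: "((\<lambda>l. \<Sum>i<2. \<Sum>b<2. \<Sum>j<2. \<Sum>b'<2. cnj (V i b) * (cP l * H l i j * \<sigma> l $$ (b',b)) * V j b')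
     has_sum (\<Sum>i<2. \<Sum>b<2. \<Sum>j<2. \<Sum>b'<2. cnj (V i b) * ?M $$ (2*i+b, 2*j+b') * V j b')) UNIV"
    by (intro has_sum_fsum has_sum_cmult_left has_sum_cmult_right HM) auto
  have Qfun: "(\<Sum>i<2. \<Sum>b<2. \<Sum>j<2. \<Sum>b'<2. cnj (V i b) * (cP l * H l i j * \<sigma> l $$ (b',b)) * V j b')
      = cP l * kf (H l) (\<lambda>b b'. \<sigma> l $$ (b',b)) V" for l
    by (simp add: kf_def sum_distrib_left mult_ac)
  have C2H: "C2 (H l)" for l
    unfolding H_def using C2_Hm[OF mu, of "t l"] tb tsum by blast
  have qT: "0 \<le> Re (qf (\<lambda>b b'. \<sigma> l $$ (b',b)) w)" for l w
    using qf_transpose[of "\<lambda>i j. \<sigma> l $$ (i,j)" w] psd_qf[OF spsd[of l], of "\<lambda>i. cnj (w i)"] by simp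
  have Qpos: "0 \<le> Re (cP l * kf (H l) (\<lambda>b b'. \<sigma> l $$ (b',b)) V)" for l
    using kf_nonneg[OF qT[of l] C2H[of l], of "\<lambda>b i. V i b"] P0 by (simp add: cP_def kf_swap[of "H l"])
  have "((\<lambda>l. Re (cP l * kf (H l) (\<lambda>b b'. \<sigma> l $$ (b',b)) V)) has_sum Re (\<Sum>i<2. \<Sum>b<2. \<Sum>j<2. \<Sum>b'<2. cnj (V i b) * ?M $$ (2*i+b, 2*j+b') * V j b')) UNIV"
    by (rule has_sum_Re, rule has_sum_eq[OF Qsum Qfun refl])
  then have "0 \<le> Re (\<Sum>i<2. \<Sum>b<2. \<Sum>j<2. \<Sum>b'<2. cnj (V i b) * ?M $$ (2*i+b, 2*j+b') * V j b')"
    by (rule has_sum_nonneg) (rule Qpos)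
  then show False using Qneg unfolding Qeq by linarith
qed


lemma mu_bound: assumes "\<mu> \<in> {0 .. 1 / sqrt 3}" shows "0 \<le> \<mu>" "\<mu>*\<mu>*3 \<le> (1::real)"
proof -
  show m0: "0 \<le> \<mu>" using assms by simp
  have "\<mu> * sqrt 3 \<le> 1" using assms by (simp add: field_simps)
  then have "(\<mu> * sqrt 3) * (\<mu> * sqrt 3) \<le> 1 * 1"
    using m0 by (intro mult_mono) auto
  then show "\<mu>*\<mu>*3 \<le> 1" by (simp add: mult_ac)
qed

theorem mainTheorem2:
  fixes \<rho> :: "complex mat" and \<mu>1 \<mu>2 :: real
  assumes "two_qubit_state \<rho>"
    and "\<mu>1 \<in> {0 .. 1 / sqrt 3}" and "\<mu>2 \<in> {0 .. 1 / sqrt 3}"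
  shows "(has_neg_eigenvalue (ptranspose_B
            (complex_of_real \<mu>1 \<cdot>\<^sub>m \<rho> + complex_of_real (1 - \<mu>1) \<cdot>\<^sub>m
               kron (ptrace_B \<rho>) ((1 / 2) \<cdot>\<^sub>m 1\<^sub>m 2)))
           \<longrightarrow> steerable_B_to_A \<rho>)
       \<and> (has_neg_eigenvalue (ptranspose_B
            (complex_of_real \<mu>2 \<cdot>\<^sub>m \<rho> + complex_of_real (1 - \<mu>2) \<cdot>\<^sub>m
               kron ((1 / 2) \<cdot>\<^sub>m 1\<^sub>m 2) (ptrace_A \<rho>)))
           \<longrightarrow> steerable_A_to_B \<rho>)"
  using part1[OF assms(1) mu_bound[OF assms(2)]] part2[OF assms(1) mu_bound[OF assms(3)]]
  unfolding steerable_B_to_A_def steerable_A_to_B_def by blast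

thm_deps mainTheorem2

end
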